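(* Let $f:\mathbb{R}\to\mathbb{R}$ be a differentiable function which is nowhere monotone. Then the set $D_{f'}$ of discontinuity points of its derivative $f'$ is not a closed subset of $\mathbb{R}$.
   Context: A function $f:\mathbb{R}\to\mathbb{R}$ is nowhere monotone if there is no nondegenerate interval $I\subseteq\mathbb{R}$ on which $f$ is monotone (nondecreasing or nonincreasing); equivalently, in every such interval there are points $x_1<y_1$ with $f(x_1)<f(y_1)$ and points $x_2<y_2$ with $f(x_2)>f(y_2)$. *)

theory Defs
  imports "HOL-Analysis.Analysis"
begin

definition nowhere_monotone :: "(real \<Rightarrow> real) \<Rightarrow> bool" where
  "nowhere_monotone f \<longleftrightarrow>
     \<not> (\<exists>I::real set. is_interval I \<and> (\<exists>x\<in>I. \<exists>y\<in>I. x < y) \<and>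
          (mono_on I f \<or> antimono_on I f))"

end

theory Submission
  imports Defs
begin

lemma quot_lim:
  fixes f g :: "real \<Rightarrow> real"
  assumes "(f has_real_derivative g x) (at x)"
  shows "(\<lambda>n. (f (x + inverse (real (Suc n))) - f x) / inverse (real (Suc n))) \<longlonglongrightarrow> g x"
proof -
  have L: "((\<lambda>h. (f (x + h) - f x) / h) \<longlongrightarrow> g x) (at 0)"
    using assms DERIV_def by blast
  have F: "filterlim (\<lambda>n. inverse (real (Suc n))) (at 0) sequentially"
    by (rule filterlim_atI[OF LIMSEQ_inverse_real_of_nat]) simp
  show ?thesis using filterlim_compose[OF L F] by (simp add: o_def)
qed

lemma quot_cont:
  fixes f :: "real \<Rightarrow> real"
  assumes "continuous_on UNIV f" "a \<noteq> 0"
  shows "continuous_on UNIV (\<lambda>x. (f (x + a) - f x) / a)"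
  by (intro continuous_intros continuous_on_compose2[OF assms(1)]) (auto simp: assms(2))

lemma osc_small:
  fixes f g :: "real \<Rightarrow> real"
  assumes der: "\<And>x. (f has_real_derivative g x) (at x)" and e: "e > 0" and r: "r > 0"
  shows "\<exists>c d. d > 0 \<and> ball c d \<subseteq> ball m r \<and> (\<forall>y\<in>ball c d. \<forall>z\<in>ball c d. \<bar>g y - g z\<bar> < e)"
proof -
  define h where "h n x = (f (x + inverse (real (Suc n))) - f x) / inverse (real (Suc n))" for n x
  have hlim: "\<And>x. (\<lambda>n. h n x) \<longlonglongrightarrow> g x" using quot_lim[OF der] unfolding h_def .
  have fc: "continuous_on UNIV f"
    using der by (meson DERIV_continuous continuous_at_imp_continuous_on)
  have hc: "\<And>n. continuous_on UNIV (h n)" unfolding h_def by (rule quot_cont[OF fc]) simp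
  define G where "G N = (\<Inter>j\<in>{N..}. {x. \<bar>h j x - h N x\<bar> \<le> e/3})" for N
  have Gc: "closed (G N)" for N unfolding G_def
    by (intro closed_INT ballI closed_Collect_le continuous_intros hc)
  have Gcov: "\<exists>N. x \<in> G N" for x
  proof -
    from CauchyD[OF LIMSEQ_imp_Cauchy[OF hlim[of x]], of "e/3"] e
    obtain M where "\<forall>m\<ge>M. \<forall>n\<ge>M. norm (h m x - h n x) < e/3" by auto
    then show ?thesis unfolding G_def by (intro exI[of _ M]) force
  qed
  define S where "S = cball m (r/2)"
  have "\<exists>N. \<not> S \<subseteq> closure (S \<inter> - G N)"
  proof (rule ccontr)
    assume A: "\<not> ?thesis"
    have "S \<subseteq> closure (\<Inter> (range (\<lambda>N. S \<inter> - G N)))"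
    proof (rule Baire)
      show "closed S" by (simp add: S_def)
      show "countable (range (\<lambda>N. S \<inter> - G N))" by simp
      fix T assume "T \<in> range (\<lambda>N. S \<inter> - G N)"
      then obtain N where T: "T = S \<inter> - G N" by auto
      show "openin (top_of_set S) T \<and> S \<subseteq> closure T"
        using A T Gc openin_open_Int[of "- G N" S] by (auto simp: open_Compl)
    qed
    moreover have "\<Inter> (range (\<lambda>N. S \<inter> - G N)) = {}" using Gcov by auto
    moreover have "m \<in> S" using r by (simp add: S_def)
    ultimately show False by auto
  qed
  then obtain N y0 where yS: "y0 \<in> S" and ync: "y0 \<notin> closure (S \<inter> - G N)" by blast
  then obtain \<epsilon> where \<epsilon>: "\<epsilon> > 0" and \<epsilon>p: "\<And>z. z \<in> S \<inter> - G N \<Longrightarrow> dist z y0 \<ge> \<epsilon>"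
    unfolding closure_approachable by (auto simp: not_less)
  have "y0 \<in> closure (ball m (r/2))" using yS r by (simp add: S_def)
  then obtain c where cb: "c \<in> ball m (r/2)" and cy: "dist c y0 < \<epsilon>"
    using \<epsilon> unfolding closure_approachable by blast
  define d0 where "d0 = min (\<epsilon> - dist c y0) (r/2 - dist m c)"
  have d0: "d0 > 0" using cb cy by (simp add: d0_def)
  have inG: "z \<in> G N" if "z \<in> ball c d0" for z
  proof -
    have "dist m z \<le> dist m c + dist c z" by (rule dist_triangle)
    also have "\<dots> < r/2" using that by (simp add: d0_def)
    finally have zS: "z \<in> S" by (simp add: S_def)
    have "dist z y0 \<le> dist z c + dist c y0" by (rule dist_triangle)
    also have "\<dots> < \<epsilon>" using that by (simp add: d0_def dist_commute)
    finally show ?thesis using \<epsilon>p[of z] zS by force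
  qed
  have gh: "\<bar>g z - h N z\<bar> \<le> e/3" if "z \<in> ball c d0" for z
  proof -
    have "\<forall>j\<ge>N. \<bar>h j z - h N z\<bar> \<le> e/3" using inG[OF that] unfolding G_def by auto
    then show ?thesis
      using LIMSEQ_le_const2[OF tendsto_rabs[OF tendsto_diff[OF hlim[of z] tendsto_const[of "h N z"]]]]
      by blast
  qed
  from hc[of N] have "isCont (h N) c" by (simp add: continuous_on_eq_continuous_at)
  moreover have "e/6 > 0" using e by simp
  ultimately obtain d1 where d1: "d1 > 0" "\<And>x. dist x c < d1 \<Longrightarrow> dist (h N x) (h N c) < e/6"
    unfolding continuous_at_eps_delta by blast
  define d where "d = min d0 d1"
  show ?thesis
  proof (intro exI conjI ballI)
    show "d > 0" using d0 d1 by (simp add: d_def)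
    show "ball c d \<subseteq> ball m r"
    proof
      fix z assume z: "z \<in> ball c d"
      have "dist m z \<le> dist m c + dist c z" by (rule dist_triangle)
      also have "\<dots> < r" using z cb r by (simp add: d_def d0_def)
      finally show "z \<in> ball m r" by simp
    qed
    fix y z assume y: "y \<in> ball c d" and z: "z \<in> ball c d"
    have a1: "\<bar>g y - h N y\<bar> \<le> e/3" "\<bar>g z - h N z\<bar> \<le> e/3"
      using gh y z by (auto simp: d_def)
    have a2: "\<bar>h N y - h N c\<bar> < e/6" "\<bar>h N z - h N c\<bar> < e/6"
      using d1(2)[of y] d1(2)[of z] y z by (auto simp: d_def dist_real_def dist_commute)
    show "\<bar>g y - g z\<bar> < e" using a1 a2 by linarith
  qed
qed

lemma exists_cont_point:
  fixes f g :: "real \<Rightarrow> real"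
  assumes der: "\<And>x. (f has_real_derivative g x) (at x)"
  shows "\<exists>p. isCont g p"
proof -
  define Op where "Op k = {x. \<exists>d>0. \<forall>y\<in>ball x d. \<forall>z\<in>ball x d. \<bar>g y - g z\<bar> < inverse (real (Suc k))}" for k
  have op: "open (Op k)" for k
    unfolding open_contains_ball
  proof
    fix x assume "x \<in> Op k"
    then obtain d where d: "d > 0" "\<forall>y\<in>ball x d. \<forall>z\<in>ball x d. \<bar>g y - g z\<bar> < inverse (real (Suc k))"
      unfolding Op_def by blast
    have "ball x d \<subseteq> Op k"
    proof
      fix x' assume x': "x' \<in> ball x d"
      have "ball x' (d - dist x x') \<subseteq> ball x d"
        using x' by (auto simp: dist_real_def)
      moreover have "d - dist x x' > 0" using x' by simp
      ultimately show "x' \<in> Op k" unfolding Op_def using d(2) by blast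
    qed
    then show "\<exists>e>0. ball x e \<subseteq> Op k" using d by blast
  qed
  have dn: "UNIV \<subseteq> closure (Op k)" for k
  proof
    fix x :: real
    show "x \<in> closure (Op k)" unfolding closure_approachable
    proof (intro allI impI)
      fix e :: real assume e: "e > 0"
      obtain c d where cd: "d > 0" "ball c d \<subseteq> ball x e"
        "\<forall>y\<in>ball c d. \<forall>z\<in>ball c d. \<bar>g y - g z\<bar> < inverse (real (Suc k))"
        using osc_small[OF der, of "inverse (real (Suc k))" e x] e by auto
      have "c \<in> Op k" unfolding Op_def using cd by blast
      moreover have "dist c x < e" using cd by (auto simp: dist_commute subset_iff)
      ultimately show "\<exists>y\<in>Op k. dist y x < e" by blast
    qed
  qed
  have "UNIV \<subseteq> closure (\<Inter> (range Op))"
  proof (rule Baire)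
    fix T assume "T \<in> range Op"
    then obtain k where "T = Op k" by blast
    then show "openin (top_of_set UNIV) T \<and> UNIV \<subseteq> closure T"
      using op[of k] dn[of k] by simp
  qed auto
  then have "\<Inter> (range Op) \<noteq> {}" by auto
  then obtain p where p: "p \<in> \<Inter> (range Op)" by blast
  have "isCont g p" unfolding continuous_at_eps_delta
  proof (intro allI impI)
    fix e :: real assume e: "e > 0"
    obtain k where k: "inverse (real (Suc k)) < e" using reals_Archimedean[OF e] by auto
    from p have "p \<in> Op k" by auto
    then obtain d where d: "d > 0" "\<forall>y\<in>ball p d. \<forall>z\<in>ball p d. \<bar>g y - g z\<bar> < inverse (real (Suc k))"
      unfolding Op_def by blast
    show "\<exists>d>0. \<forall>x'. dist x' p < d \<longrightarrow> dist (g x') (g p) < e"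
    proof (intro exI conjI allI impI)
      fix x' assume "dist x' p < d"
      then have "\<bar>g x' - g p\<bar> < inverse (real (Suc k))" using d by (auto simp: dist_commute)
      then show "dist (g x') (g p) < e" using k by (simp add: dist_real_def)
    qed (use d in auto)
  qed
  then show ?thesis by blast
qed


lemma interval_mono:
  fixes f g :: "real \<Rightarrow> real"
  assumes der: "\<And>x. (f has_real_derivative g x) (at x)"
    and nm: "nowhere_monotone f" and ab: "a < b"
    and sgn: "(\<forall>x\<in>{a..b}. g x \<ge> 0) \<or> (\<forall>x\<in>{a..b}. g x \<le> 0)"
  shows False
proof -
  have "mono_on {a..b} f \<or> antimono_on {a..b} f"
  proof (cases "\<forall>x\<in>{a..b}. g x \<ge> 0")
    case True
    have "mono_on {a..b} f"
    proof (rule mono_onI)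
      fix r s assume "r \<in> {a..b}" "s \<in> {a..b}" "r \<le> s"
      show "f r \<le> f s"
      proof (rule DERIV_nonneg_imp_nondecreasing[of r s f])
        show "r \<le> s" by fact
      next
        fix x assume "r \<le> x" "x \<le> s"
        then have "x \<in> {a..b}" using \<open>r \<in> {a..b}\<close> \<open>s \<in> {a..b}\<close> by simp
        then show "\<exists>y. DERIV f x :> y \<and> y \<ge> 0" using True der by blast
      qed
    qed
    then show ?thesis by blast
  next
    case False
    then have F: "\<forall>x\<in>{a..b}. g x \<le> 0" using sgn by blast
    have "antimono_on {a..b} f"
    proof (rule monotone_onI)
      fix r s assume "r \<in> {a..b}" "s \<in> {a..b}" "r \<le> s"
      show "f s \<le> f r"
      proof (rule DERIV_nonpos_imp_nonincreasing[of r s f])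
        show "r \<le> s" by fact
      next
        fix x assume "r \<le> x" "x \<le> s"
        then have "x \<in> {a..b}" using \<open>r \<in> {a..b}\<close> \<open>s \<in> {a..b}\<close> by simp
        then show "\<exists>y. DERIV f x :> y \<and> y \<le> 0" using F der by blast
      qed
    qed
    then show ?thesis by blast
  qed
  moreover have "is_interval {a..b}" by (rule is_interval_cc)
  moreover have "\<exists>x\<in>{a..b}. \<exists>y\<in>{a..b}. x < y" using ab by (intro bexI[of _ a] bexI[of _ b]) auto
  ultimately have "\<exists>I::real set. is_interval I \<and> (\<exists>x\<in>I. \<exists>y\<in>I. x < y) \<and>
          (mono_on I f \<or> antimono_on I f)" by (intro exI[of _ "{a..b}"]) simp
  then show False using nm unfolding nowhere_monotone_def by (rule notE[rotated])
qed

lemma cont_nonzero: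
  fixes f g :: "real \<Rightarrow> real"
  assumes der: "\<And>x. (f has_real_derivative g x) (at x)"
    and nm: "nowhere_monotone f" and c: "isCont g x1" and nz: "g x1 \<noteq> 0"
  shows False
proof -
  have "\<bar>g x1\<bar> > 0" using nz by simp
  then obtain d where d: "d > 0" "\<And>y. dist y x1 < d \<Longrightarrow> dist (g y) (g x1) < \<bar>g x1\<bar>"
    using c unfolding continuous_at_eps_delta by blast
  have B: "\<And>y. y \<in> {x1 - d/2..x1 + d/2} \<Longrightarrow> \<bar>g y - g x1\<bar> < \<bar>g x1\<bar>"
    using d by (auto simp: dist_real_def)
  have "(\<forall>x\<in>{x1 - d/2..x1 + d/2}. g x \<ge> 0) \<or> (\<forall>x\<in>{x1 - d/2..x1 + d/2}. g x \<le> 0)"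
  proof (cases "g x1 > 0")
    case True
    have "\<forall>x\<in>{x1 - d/2..x1 + d/2}. g x \<ge> 0"
    proof
      fix x assume "x \<in> {x1 - d/2..x1 + d/2}"
      from B[OF this] True show "g x \<ge> 0" by linarith
    qed
    then show ?thesis by blast
  next
    case False
    have "\<forall>x\<in>{x1 - d/2..x1 + d/2}. g x \<le> 0"
    proof
      fix x assume "x \<in> {x1 - d/2..x1 + d/2}"
      from B[OF this] False show "g x \<le> 0" by linarith
    qed
    then show ?thesis by blast
  qed
  then show False using interval_mono[OF der nm, of "x1 - d/2" "x1 + d/2"] d by auto
qed

theorem mainTheorem8:
  fixes f :: "real \<Rightarrow> real"
  assumes "\<forall>x. f differentiable (at x)"
    and "nowhere_monotone f"
  shows "\<not> closed {x. \<not> isCont (deriv f) x}"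
proof
  assume cl: "closed {x. \<not> isCont (deriv f) x}"
  have der: "\<And>x. (f has_real_derivative deriv f x) (at x)"
    using assms(1) DERIV_deriv_iff_real_differentiable by blast
  obtain p where p: "isCont (deriv f) p" using exists_cont_point[OF der] by blast
  have "open {x. isCont (deriv f) x}"
    using cl by (simp add: closed_def Compl_eq[symmetric] Collect_neg_eq[symmetric])
  then obtain r where r: "r > 0" "ball p r \<subseteq> {x. isCont (deriv f) x}"
    using p unfolding open_contains_ball by blast
  show False
  proof (cases "\<exists>x1\<in>ball p r. deriv f x1 \<noteq> 0")
    case True
    then obtain x1 where "x1 \<in> ball p r" "deriv f x1 \<noteq> 0" by blast
    then show False using cont_nonzero[OF der assms(2)] r by blast
  next
    case False
    have "\<forall>x\<in>{p - r/2..p + r/2}. deriv f x \<ge> 0"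
      using False r(1) by (auto simp: dist_real_def)
    then show False using interval_mono[OF der assms(2), of "p - r/2" "p + r/2"] r by auto
  qed
qed

end
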